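(* Let $(f,g)$ and $(f',g')$ be two models in the model class $\Theta$, with induced conditional distributions $p_{f,g}$, $p_{f',g'}$ and logit vectors $u(x)$, $u'(x)$. Then $$d_{\mathrm{logit}}^2(p_{f,g},p_{f',g'}) \;\ge\; 2\, d_{\mathrm{KL}}(p_{f,g},p_{f',g'}).$$ If moreover there is $0<\tau<1/3$ such that both $(f,g)$ and $(f',g')$ are $\tau$-lower bounded, then $$d_{\mathrm{logit}}^2(p_{f,g},p_{f',g'}) \;\le\; \frac{4\log(\tau)^2}{\tau}\, d_{\mathrm{KL}}(p_{f,g},p_{f',g'}).$$
   Context: Let $\mathcal X$ be an input space with data distribution $p_x$, and $\mathcal Y=\{y_1,\dots,y_k\}$ a finite label set. The model class $\Theta$ consists of pairs $(f,g)$ with $f:\mathcal X\to\mathbb R^m$ (embedding) and $g:\mathcal Y\to\mathbb R^m$ (unembedding), normalized so that $\sum_{y\in\mathcal Y} g(y)=0$. Each model induces $p_{f,g}(y\mid x)=\exp(f(x)^\top g(y))/\sum_{y'\in\mathcal Y}\exp(f(x)^\top g(y'))$. Its logit vector is $u(x)=(f(x)^\top g(y_1),\dots,f(x)^\top g(y_k))^\top\in\mathbb R^k$ (similarly $u'$ for $(f',g')$). The logit distance is $d_{\mathrm{logit}}^2(p_{f,g},p_{f',g'})=\mathbb E_{x\sim p_x}\|u(x)-u'(x)\|_2^2$, and $d_{\mathrm{KL}}(p_{f,g},p_{f',g'})=\mathbb E_{x\sim p_x}\big[\mathrm{KL}(p_{f,g}(\cdot\mid x)\,\|\,p_{f',g'}(\cdot\mid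 x))\big]$. A model is $\tau$-lower bounded ($\tau>0$) if for $p_x$-almost every $x$, $\min_{y\in\mathcal Y} p_{f,g}(y\mid x)\ge\tau$. *)

theory Defs
  imports "HOL-Probability.Probability"
begin

definition in_model_class ::
  "'x measure \<Rightarrow> 'y set \<Rightarrow> ('x \<Rightarrow> 'v::euclidean_space) \<Rightarrow> ('y \<Rightarrow> 'v) \<Rightarrow> bool" where
  "in_model_class M Y f g \<longleftrightarrow> f \<in> borel_measurable M \<and> (\<Sum>y\<in>Y. g y) = 0"

definition p_model ::
  "'y set \<Rightarrow> ('x \<Rightarrow> 'v::euclidean_space) \<Rightarrow> ('y \<Rightarrow> 'v) \<Rightarrow> 'x \<Rightarrow> 'y \<Rightarrow> real" where
  "p_model Y f g x y = exp (f x \<bullet> g y) / (\<Sum>y'\<in>Y. exp (f x \<bullet> g y'))"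

definition logit :: "('x \<Rightarrow> 'v::euclidean_space) \<Rightarrow> ('y \<Rightarrow> 'v) \<Rightarrow> 'x \<Rightarrow> 'y \<Rightarrow> real" where
  "logit f g x y = f x \<bullet> g y"

definition d_logit2 ::
  "'x measure \<Rightarrow> 'y set \<Rightarrow> ('x \<Rightarrow> 'v::euclidean_space) \<Rightarrow> ('y \<Rightarrow> 'v)
     \<Rightarrow> ('x \<Rightarrow> 'v) \<Rightarrow> ('y \<Rightarrow> 'v) \<Rightarrow> ennreal" where
  "d_logit2 M Y f g f' g' =
     (\<integral>\<^sup>+ x. ennreal (\<Sum>y\<in>Y. (logit f g x y - logit f' g' x y)\<^sup>2) \<partial>M)"

definition KL_div :: "'y set \<Rightarrow> ('y \<Rightarrow> real) \<Rightarrow> ('y \<Rightarrow> real) \<Rightarrow> real" where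
  "KL_div Y p q = (\<Sum>y\<in>Y. p y * ln (p y / q y))"

definition d_KL ::
  "'x measure \<Rightarrow> 'y set \<Rightarrow> ('x \<Rightarrow> 'v::euclidean_space) \<Rightarrow> ('y \<Rightarrow> 'v)
     \<Rightarrow> ('x \<Rightarrow> 'v) \<Rightarrow> ('y \<Rightarrow> 'v) \<Rightarrow> ennreal" where
  "d_KL M Y f g f' g' =
     (\<integral>\<^sup>+ x. ennreal (KL_div Y (p_model Y f g x) (p_model Y f' g' x)) \<partial>M)"

definition lower_bounded ::
  "'x measure \<Rightarrow> 'y set \<Rightarrow> real \<Rightarrow> ('x \<Rightarrow> 'v::euclidean_space) \<Rightarrow> ('y \<Rightarrow> 'v) \<Rightarrow> bool" where
  "lower_bounded M Y \<tau> f g \<longleftrightarrow> \<tau> > 0 \<and> (AE x in M. \<forall>y\<in>Y. p_model Y f g x y \<ge> \<tau>)"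

end

theory Submission
  imports Defs
begin

lemma scal_pos:
  fixes t :: real assumes "t \<ge> 0"
  shows "t\<^sup>2 \<le> 2 * (t * exp t - exp t + 1)"
proof -
  define h where "h = (\<lambda>s::real. 2 * (s * exp s - exp s + 1) - s\<^sup>2)"
  have "h 0 \<le> h t"
  proof (rule DERIV_nonneg_imp_increasing_open[OF assms])
    fix s :: real assume s: "0 < s" "s < t"
    have "DERIV h s :> 2 * s * (exp s - 1)"
      unfolding h_def by (auto intro!: derivative_eq_intros simp: algebra_simps power2_eq_square)
    moreover have "2 * s * (exp s - 1) \<ge> 0" using s by (simp add: one_le_exp_iff)
    ultimately show "\<exists>y. DERIV h s :> y \<and> y \<ge> 0" by blast
  next
    show "continuous_on {0..t} h" unfolding h_def by (intro continuous_intros)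
  qed
  then show ?thesis by (simp add: h_def)
qed

lemma scal_neg:
  fixes t :: real assumes "t \<le> 0"
  shows "exp t * t\<^sup>2 \<le> 2 * (t * exp t - exp t + 1)"
proof -
  define h where "h = (\<lambda>s::real. 2 * (s * exp s - exp s + 1) - exp s * s\<^sup>2)"
  have "h t \<ge> h 0"
  proof (rule DERIV_nonpos_imp_decreasing_open[OF assms])
    fix s :: real assume s: "t < s" "s < 0"
    have "DERIV h s :> - (exp s * s\<^sup>2)"
      unfolding h_def by (auto intro!: derivative_eq_intros simp: algebra_simps power2_eq_square)
    moreover have "- (exp s * s\<^sup>2) \<le> 0" by simp
    ultimately show "\<exists>y. DERIV h s :> y \<and> y \<le> 0" by blast
  next
    show "continuous_on {t..0} h" unfolding h_def by (intro continuous_intros)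
  qed
  then show ?thesis by (simp add: h_def)
qed

lemma scal:
  fixes a b :: real assumes "a > 0" "b > 0"
  shows "min a b * (ln a - ln b)\<^sup>2 \<le> 2 * (a * (ln a - ln b) - a + b)"
proof -
  define t where "t = ln a - ln b"
  have a: "a = b * exp t" using assms by (simp add: t_def exp_diff)
  show ?thesis
  proof (cases "t \<ge> 0")
    case True
    have "min a b \<le> b" by simp
    hence "min a b * t\<^sup>2 \<le> b * t\<^sup>2" by (simp add: mult_right_mono)
    also have "\<dots> \<le> b * (2 * (t * exp t - exp t + 1))"
      using scal_pos[OF True] assms by (simp add: mult_left_mono)
    also have "\<dots> = 2 * (a * t - a + b)" by (simp add: a algebra_simps)
    finally show ?thesis by (simp add: t_def)
  next
    case False
    have "min a b \<le> a" by simp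
    hence "min a b * t\<^sup>2 \<le> a * t\<^sup>2" by (simp add: mult_right_mono)
    also have "\<dots> = b * (exp t * t\<^sup>2)" by (simp add: a)
    also have "\<dots> \<le> b * (2 * (t * exp t - exp t + 1))"
      using scal_neg[of t] False assms by (simp add: mult_left_mono)
    also have "\<dots> = 2 * (a * t - a + b)" by (simp add: a algebra_simps)
    finally show ?thesis by (simp add: t_def)
  qed
qed


lemma hoeff_finite:
  fixes p X :: "'y \<Rightarrow> real" and R :: real
  assumes fin: "finite Y" and p0: "\<And>y. y \<in> Y \<Longrightarrow> p y \<ge> 0" and p1: "(\<Sum>y\<in>Y. p y) = 1"
    and XR: "\<And>y. y \<in> Y \<Longrightarrow> \<bar>X y\<bar> \<le> R"
  shows "(\<Sum>y\<in>Y. p y * exp (X y - (\<Sum>z\<in>Y. p z * X z))) \<le> exp (R\<^sup>2 / 2)"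
proof -
  define p' where "p' = (\<lambda>y. if y \<in> Y then p y else 0)"
  have p'0: "\<And>y. 0 \<le> p' y" using p0 by (simp add: p'_def)
  have p'1: "(\<integral>\<^sup>+y. ennreal (p' y) \<partial>count_space UNIV) = 1"
  proof -
    have "(\<integral>\<^sup>+y. ennreal (p' y) \<partial>count_space UNIV) = (\<integral>\<^sup>+y. ennreal (p' y) * indicator Y y \<partial>count_space UNIV)"
      by (intro nn_integral_cong) (auto simp: p'_def split: split_indicator)
    also have "\<dots> = (\<Sum>y\<in>Y. ennreal (p' y))"
      using fin by (simp add: nn_integral_indicator_finite)
    also have "\<dots> = ennreal (\<Sum>y\<in>Y. p' y)" using p'0 by (simp add: sum_ennreal)
    also have "(\<Sum>y\<in>Y. p' y) = 1" using p1 by (simp add: p'_def)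
    finally show ?thesis by simp
  qed
  define P where "P = embed_pmf p'"
  have pmfP: "\<And>y. pmf P y = p' y" unfolding P_def using p'0 p'1 by (simp add: pmf_embed_pmf)
  have setP: "set_pmf P \<subseteq> Y" by (auto simp: set_pmf_eq pmfP p'_def split: if_splits)
  interpret interval_bounded_random_variable "measure_pmf P" X "-R" R
  proof unfold_locales
    show "AE x in measure_pmf P. X x \<in> {- R..R}"
      using setP XR by (intro AE_pmfI) (force simp: abs_le_iff)
  qed simp
  have E: "(\<integral>x. X x \<partial>measure_pmf P) = (\<Sum>z\<in>Y. p z * X z)"
    proof -
    have "(\<integral>x. X x \<partial>measure_pmf P) = (\<Sum>a\<in>Y. X a * pmf P a)"
      by (rule integral_measure_pmf_real[where A=Y]) (use setP fin in auto)
    then show ?thesis by (simp add: pmfP p'_def mult.commute)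
  qed
  have "(\<integral>\<^sup>+x. ennreal (exp (1 * (X x - (\<integral>x. X x \<partial>measure_pmf P)))) \<partial>measure_pmf P) \<le> ennreal (exp (1\<^sup>2 * (R - - R)\<^sup>2 / 8))"
    by (rule Hoeffdings_lemma_nn_integral) simp
  also have "(1\<^sup>2 * (R - - R)\<^sup>2 / 8) = R\<^sup>2 / 2" by (simp add: power2_eq_square algebra_simps)
  also have "(\<integral>\<^sup>+x. ennreal (exp (1 * (X x - (\<integral>x. X x \<partial>measure_pmf P)))) \<partial>measure_pmf P)
     = (\<Sum>y\<in>Y. ennreal (exp (X y - (\<integral>x. X x \<partial>measure_pmf P))) * pmf P y)"
    using setP fin by (subst nn_integral_measure_pmf_support[where A=Y]) auto
  also have "\<dots> = ennreal (\<Sum>y\<in>Y. p y * exp (X y - (\<Sum>z\<in>Y. p z * X z)))"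
    using p0 by (subst sum_ennreal[symmetric]) (auto simp: E pmfP p'_def ennreal_mult' mult.commute intro!: sum.cong)
  finally show ?thesis by (subst (asm) ennreal_le_iff) auto
qed


lemma softmax_facts:
  fixes u :: "'y \<Rightarrow> real"
  assumes fin: "finite Y" and ne: "Y \<noteq> {}"
  shows "(\<Sum>y\<in>Y. exp (u y)) > 0" "(\<Sum>y\<in>Y. exp (u y) / (\<Sum>y\<in>Y. exp (u y))) = 1"
proof -
  show pos: "(\<Sum>y\<in>Y. exp (u y)) > 0" using fin ne by (intro sum_pos) auto
  show "(\<Sum>y\<in>Y. exp (u y) / (\<Sum>y\<in>Y. exp (u y))) = 1"
    using pos by (simp add: sum_divide_distrib[symmetric])
qed

lemma ln_ratio:
  fixes a b Z Z' :: real
  assumes "Z > 0" "Z' > 0"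
  shows "ln ((exp a / Z) / (exp b / Z')) = a - b - ln Z + ln Z'"
proof -
  have "(exp a / Z) / (exp b / Z') = exp (a - b) * (Z' / Z)"
    using assms by (simp add: exp_diff mult.commute)
  then show ?thesis using assms by (simp add: ln_div ln_mult)
qed

lemma KL_upper:
  fixes u v :: "'y \<Rightarrow> real"
  assumes fin: "finite Y" and ne: "Y \<noteq> {}"
  shows "KL_div Y (\<lambda>y. exp (u y) / (\<Sum>y\<in>Y. exp (u y))) (\<lambda>y. exp (v y) / (\<Sum>y\<in>Y. exp (v y)))
     \<le> (\<Sum>y\<in>Y. (u y - v y)\<^sup>2) / 2"
proof -
  define Z where "Z = (\<Sum>y\<in>Y. exp (u y))"
  define Z' where "Z' = (\<Sum>y\<in>Y. exp (v y))"
  define p where "p = (\<lambda>y. exp (u y) / Z)"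
  have Z: "Z > 0" and Z': "Z' > 0" using softmax_facts[OF fin ne] by (auto simp: Z_def Z'_def)
  have p1: "(\<Sum>y\<in>Y. p y) = 1" using softmax_facts[OF fin ne, of u] by (simp add: p_def Z_def)
  define m where "m = (\<Sum>z\<in>Y. p z * (v z - u z))"
  define R where "R = sqrt (\<Sum>y\<in>Y. (u y - v y)\<^sup>2)"
  have R2: "R\<^sup>2 = (\<Sum>y\<in>Y. (u y - v y)\<^sup>2)" unfolding R_def by (simp add: sum_nonneg)
  have XR: "\<bar>v y - u y\<bar> \<le> R" if "y \<in> Y" for y
  proof -
    have "(v y - u y)\<^sup>2 \<le> (\<Sum>y\<in>Y. (u y - v y)\<^sup>2)"
      using member_le_sum[of y Y "\<lambda>y. (u y - v y)\<^sup>2"] fin that by (simp add: power2_commute)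
    then show ?thesis unfolding R_def by (simp add: real_le_rsqrt)
  qed
  have H: "(\<Sum>y\<in>Y. p y * exp ((v y - u y) - m)) \<le> exp (R\<^sup>2 / 2)"
    unfolding m_def by (rule hoeff_finite[OF fin _ p1 XR]) (auto simp: p_def Z intro: divide_nonneg_pos)
  have "(\<Sum>y\<in>Y. p y * exp ((v y - u y) - m)) = exp (- m) * Z' / Z"
  proof -
    have "p y * exp ((v y - u y) - m) = exp (- m) / Z * exp (v y)" for y
      unfolding p_def by (simp add: exp_diff exp_minus exp_add field_simps)
    hence "(\<Sum>y\<in>Y. p y * exp ((v y - u y) - m)) = (\<Sum>y\<in>Y. exp (- m) / Z * exp (v y))" by simp
    also have "\<dots> = exp (- m) * Z' / Z" by (simp add: Z'_def sum_distrib_left sum_divide_distrib)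
    finally show ?thesis .
  qed
  with H have "exp (- m) * Z' / Z \<le> exp (R\<^sup>2 / 2)" by simp
  hence "ln (exp (- m) * Z' / Z) \<le> ln (exp (R\<^sup>2 / 2))"
    using Z Z' by (subst ln_le_cancel_iff) auto
  hence "ln (exp (- m) * Z' / Z) \<le> R\<^sup>2 / 2" by simp
  hence I: "- m + ln Z' - ln Z \<le> R\<^sup>2 / 2" using Z Z' by (simp add: ln_div ln_mult)
  have "KL_div Y (\<lambda>y. exp (u y) / Z) (\<lambda>y. exp (v y) / Z') = (\<Sum>y\<in>Y. p y * (u y - v y - ln Z + ln Z'))"
    unfolding KL_div_def p_def by (intro sum.cong refl) (simp only: ln_ratio[OF Z Z'])
  also have "\<dots> = - m + (ln Z' - ln Z) * (\<Sum>y\<in>Y. p y)"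
    unfolding m_def by (simp add: sum_distrib_right sum_distrib_left[symmetric] algebra_simps sum.distrib sum_subtractf)
  also have "\<dots> \<le> R\<^sup>2 / 2" using I p1 by simp
  finally show ?thesis by (simp add: R2 Z_def Z'_def)
qed

lemma KL_lower:
  fixes u v :: "'y \<Rightarrow> real"
  assumes fin: "finite Y" and ne: "Y \<noteq> {}" and zs: "(\<Sum>y\<in>Y. u y - v y) = 0"
    and tau: "\<tau> > 0"
    and pt: "\<And>y. y \<in> Y \<Longrightarrow> exp (u y) / (\<Sum>y\<in>Y. exp (u y)) \<ge> \<tau>"
    and qt: "\<And>y. y \<in> Y \<Longrightarrow> exp (v y) / (\<Sum>y\<in>Y. exp (v y)) \<ge> \<tau>"
  shows "\<tau> * (\<Sum>y\<in>Y. (u y - v y)\<^sup>2) \<le>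
     2 * KL_div Y (\<lambda>y. exp (u y) / (\<Sum>y\<in>Y. exp (u y))) (\<lambda>y. exp (v y) / (\<Sum>y\<in>Y. exp (v y)))"
proof -
  define Z where "Z = (\<Sum>y\<in>Y. exp (u y))"
  define Z' where "Z' = (\<Sum>y\<in>Y. exp (v y))"
  define p where "p = (\<lambda>y. exp (u y) / Z)"
  define q where "q = (\<lambda>y. exp (v y) / Z')"
  have Z: "Z > 0" and Z': "Z' > 0" using softmax_facts[OF fin ne] by (auto simp: Z_def Z'_def)
  have p1: "(\<Sum>y\<in>Y. p y) = 1" using softmax_facts[OF fin ne, of u] by (simp add: p_def Z_def)
  have q1: "(\<Sum>y\<in>Y. q y) = 1" using softmax_facts[OF fin ne, of v] by (simp add: q_def Z'_def)
  have pp: "p y > 0" "q y > 0" for y using Z Z' by (auto simp: p_def q_def)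
  define c where "c = ln Z - ln Z'"
  have r: "ln (p y) - ln (q y) = (u y - v y) - c" for y
    using Z Z' by (simp add: p_def q_def c_def ln_div)
  have "(\<Sum>y\<in>Y. ((u y - v y) - c)\<^sup>2) = (\<Sum>y\<in>Y. (u y - v y)\<^sup>2) - 2 * c * (\<Sum>y\<in>Y. u y - v y) + card Y * c\<^sup>2"
  proof -
    have "((u y - v y) - c)\<^sup>2 = (u y - v y)\<^sup>2 - 2 * c * (u y - v y) + c\<^sup>2" for y
      by (simp add: power2_eq_square algebra_simps)
    hence "(\<Sum>y\<in>Y. ((u y - v y) - c)\<^sup>2) = (\<Sum>y\<in>Y. (u y - v y)\<^sup>2 - 2 * c * (u y - v y) + c\<^sup>2)" by simp
    also have "\<dots> = (\<Sum>y\<in>Y. (u y - v y)\<^sup>2) - 2 * c * (\<Sum>y\<in>Y. u y - v y) + card Y * c\<^sup>2"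
      by (simp only: sum.distrib sum_subtractf sum_distrib_left[symmetric]) simp
    finally show ?thesis .
  qed
  hence S: "(\<Sum>y\<in>Y. (u y - v y)\<^sup>2) \<le> (\<Sum>y\<in>Y. (ln (p y) - ln (q y))\<^sup>2)"
    using zs by (simp add: r)
  have T: "\<tau> * (ln (p y) - ln (q y))\<^sup>2 \<le> 2 * (p y * (ln (p y) - ln (q y)) - p y + q y)" if "y \<in> Y" for y
  proof -
    have "\<tau> \<le> min (p y) (q y)" using pt[OF that] qt[OF that] by (simp add: p_def q_def Z_def Z'_def)
    hence "\<tau> * (ln (p y) - ln (q y))\<^sup>2 \<le> min (p y) (q y) * (ln (p y) - ln (q y))\<^sup>2"
      by (simp add: mult_right_mono)
    also have "\<dots> \<le> 2 * (p y * (ln (p y) - ln (q y)) - p y + q y)" by (rule scal) (use pp in auto)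
    finally show ?thesis .
  qed
  have "\<tau> * (\<Sum>y\<in>Y. (u y - v y)\<^sup>2) \<le> \<tau> * (\<Sum>y\<in>Y. (ln (p y) - ln (q y))\<^sup>2)"
    using S tau by simp
  also have "\<dots> = (\<Sum>y\<in>Y. \<tau> * (ln (p y) - ln (q y))\<^sup>2)" by (simp add: sum_distrib_left)
  also have "\<dots> \<le> (\<Sum>y\<in>Y. 2 * (p y * (ln (p y) - ln (q y)) - p y + q y))" by (rule sum_mono) (rule T)
  also have "\<dots> = 2 * (\<Sum>y\<in>Y. p y * (ln (p y) - ln (q y))) - 2 * (\<Sum>y\<in>Y. p y) + 2 * (\<Sum>y\<in>Y. q y)"
    by (simp add: sum.distrib sum_subtractf sum_distrib_left)
  also have "\<dots> = 2 * KL_div Y p q"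
  proof -
    have pn: "p y \<noteq> 0" "q y \<noteq> 0" for y using pp[of y] by auto
    show ?thesis using p1 q1 pn by (simp add: KL_div_def ln_div)
  qed
  finally show ?thesis by (simp add: p_def q_def Z_def Z'_def)
qed


theorem mainTheorem1:
  fixes M :: "'x measure" and Y :: "'y set"
    and f f' :: "'x \<Rightarrow> 'v::euclidean_space" and g g' :: "'y \<Rightarrow> 'v"
  assumes "prob_space M"
    and "finite Y" and "Y \<noteq> {}"
    and "in_model_class M Y f g" and "in_model_class M Y f' g'"
  shows "d_logit2 M Y f g f' g' \<ge> 2 * d_KL M Y f g f' g'
    \<and> (\<forall>\<tau>::real. 0 < \<tau> \<and> \<tau> < 1/3 \<and> lower_bounded M Y \<tau> f g \<and> lower_bounded M Y \<tau> f' g'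
         \<longrightarrow> d_logit2 M Y f g f' g' \<le> ennreal (4 * (ln \<tau>)\<^sup>2 / \<tau>) * d_KL M Y f g f' g')"
proof -
  note fin = assms(2) and ne = assms(3)
  have fm[measurable]: "f \<in> borel_measurable M" "f' \<in> borel_measurable M"
    using assms(4,5) by (auto simp: in_model_class_def)
  have g0: "(\<Sum>y\<in>Y. g y) = 0" "(\<Sum>y\<in>Y. g' y) = 0"
    using assms(4,5) by (auto simp: in_model_class_def)
  define S where "S = (\<lambda>x. \<Sum>y\<in>Y. (logit f g x y - logit f' g' x y)\<^sup>2)"
  define K where "K = (\<lambda>x. KL_div Y (p_model Y f g x) (p_model Y f' g' x))"
  have Kexp: "K x = KL_div Y (\<lambda>y. exp (logit f g x y) / (\<Sum>y\<in>Y. exp (logit f g x y)))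
        (\<lambda>y. exp (logit f' g' x y) / (\<Sum>y\<in>Y. exp (logit f' g' x y)))" for x
    by (simp add: K_def p_model_def[abs_def] logit_def)
  have Km: "(\<lambda>x. ennreal (K x)) \<in> borel_measurable M"
    unfolding K_def KL_div_def p_model_def by measurable
  have dl: "d_logit2 M Y f g f' g' = (\<integral>\<^sup>+x. ennreal (S x) \<partial>M)" by (simp add: d_logit2_def S_def)
  have dk: "d_KL M Y f g f' g' = (\<integral>\<^sup>+x. ennreal (K x) \<partial>M)" by (simp add: d_KL_def K_def)
  have up: "K x \<le> S x / 2" for x
    unfolding Kexp S_def by (rule KL_upper[OF fin ne])
  have part1: "2 * d_KL M Y f g f' g' \<le> d_logit2 M Y f g f' g'"
  proof -
    have "2 * d_KL M Y f g f' g' = (\<integral>\<^sup>+x. 2 * ennreal (K x) \<partial>M)"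
      unfolding dk by (rule nn_integral_cmult[symmetric, OF Km])
    also have "\<dots> \<le> (\<integral>\<^sup>+x. ennreal (S x) \<partial>M)"
    proof (rule nn_integral_mono)
      fix x
      have "2 * ennreal (K x) = ennreal (2 * K x)" using ennreal_mult'[of 2 "K x"] by simp
      also have "\<dots> \<le> ennreal (S x)" using up[of x] by (intro ennreal_leI) simp
      finally show "2 * ennreal (K x) \<le> ennreal (S x)" .
    qed
    finally show ?thesis by (simp add: dl)
  qed
  have part2: "d_logit2 M Y f g f' g' \<le> ennreal (4 * (ln \<tau>)\<^sup>2 / \<tau>) * d_KL M Y f g f' g'"
    if t: "0 < \<tau>" "\<tau> < 1/3" and lb: "lower_bounded M Y \<tau> f g" "lower_bounded M Y \<tau> f' g'" for \<tau> :: real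
  proof -
    define C where "C = 4 * (ln \<tau>)\<^sup>2 / \<tau>"
    have "exp (-1) \<ge> (1/3::real)" using exp_le by (simp add: exp_minus field_simps)
    hence "\<tau> < exp (-1)" using t by simp
    hence "ln \<tau> < ln (exp (-1))" using t by (subst ln_less_cancel_iff) auto
    hence l1: "ln \<tau> < -1" by simp
    have "1 < (ln \<tau>)\<^sup>2"
    proof -
      have "1 < (- ln \<tau>) * (- ln \<tau>)" using l1 by (metis less_1_mult neg_less_iff_less minus_minus)
      thus ?thesis by (simp add: power2_eq_square)
    qed
    hence C: "2 / \<tau> \<le> C" unfolding C_def using t by (simp add: divide_right_mono)
    have zs: "(\<Sum>y\<in>Y. logit f g x y - logit f' g' x y) = 0" for x
      by (simp add: sum_subtractf logit_def inner_sum_right[symmetric] g0)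
    have a1: "AE x in M. \<forall>y\<in>Y. p_model Y f g x y \<ge> \<tau>"
      and a2: "AE x in M. \<forall>y\<in>Y. p_model Y f' g' x y \<ge> \<tau>"
      using lb unfolding lower_bounded_def by auto
    have "AE x in M. ennreal (S x) \<le> ennreal C * ennreal (K x)"
      using a1 a2
    proof eventually_elim
      case (elim x)
      have low: "\<tau> * S x \<le> 2 * K x"
        unfolding Kexp S_def
        by (rule KL_lower[OF fin ne zs t(1)]) (use elim in \<open>auto simp: p_model_def logit_def\<close>)
      have S0: "S x \<ge> 0" unfolding S_def by (simp add: sum_nonneg)
      have K0: "K x \<ge> 0" using low S0 t(1) by (smt (verit) mult_nonneg_nonneg)
      have "S x \<le> (2 / \<tau>) * K x" using low t(1) by (simp add: field_simps mult.commute)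
      also have "\<dots> \<le> C * K x" using C K0 by (rule mult_right_mono)
      finally have "ennreal (S x) \<le> ennreal (C * K x)" by (rule ennreal_leI)
      also have "\<dots> = ennreal C * ennreal (K x)" using K0 C t(1)
        by (subst ennreal_mult) (auto intro: order_trans[OF _ C])
      finally show ?case .
    qed
    hence "(\<integral>\<^sup>+x. ennreal (S x) \<partial>M) \<le> (\<integral>\<^sup>+x. ennreal C * ennreal (K x) \<partial>M)"
      by (rule nn_integral_mono_AE)
    also have "\<dots> = ennreal C * (\<integral>\<^sup>+x. ennreal (K x) \<partial>M)" by (rule nn_integral_cmult[OF Km])
    finally show ?thesis by (simp add: dl dk C_def)
  qed
  show ?thesis using part1 part2 by blast
qed

end
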